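(* Let $\lambda_1\ge\lambda_2\ge\lambda_3>0$ and $D=\mathrm{diag}(\lambda_1,\lambda_2,\lambda_3)$. Every local minimum of $\widetilde W_{1,0}(\cdot;D)$ on $SO(3)$ is a global minimum. In contrast, there exist such $D$ for which $\widetilde W_{1,0}(\cdot;D)$ has local maxima on $SO(3)$ that are not global maxima (e.g. $\mathrm{diag}(1,-1,-1)$ when $\lambda_1>\lambda_2>\lambda_3$ and $\lambda_1-\lambda_2>2$).
   Context: $\mathrm{sym}(Y)=\tfrac12(Y+Y^T)$, $\|Y\|^2=\mathrm{tr}(Y^TY)$ (Frobenius norm). $\widetilde W_{1,0}(R;D)=\|\mathrm{sym}(R^TD-\mathbb I_3)\|^2$ for $R\in SO(3)$. *)

theory Defs
  imports "HOL-Analysis.Analysis"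
begin

definition SO3 :: "(real^3^3) set" where
  "SO3 = {R. orthogonal_matrix R \<and> det R = 1}"

definition diag3 :: "real \<Rightarrow> real \<Rightarrow> real \<Rightarrow> real^3^3" where
  "diag3 a b c = (\<chi> i j. if i = j then (vector [a, b, c] :: real^3) $ i else 0)"

definition msym :: "real^3^3 \<Rightarrow> real^3^3" where
  "msym Y = (1/2) *\<^sub>R (Y + transpose Y)"

definition frob_sq :: "real^3^3 \<Rightarrow> real" where
  "frob_sq Y = trace (transpose Y ** Y)"

definition W10 :: "real^3^3 \<Rightarrow> real^3^3 \<Rightarrow> real" where
  "W10 D R = frob_sq (msym (transpose R ** D - mat 1))"

definition local_min_on :: "('a::metric_space \<Rightarrow> real) \<Rightarrow> 'a set \<Rightarrow> 'a \<Rightarrow> bool" where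
  "local_min_on f S x \<longleftrightarrow> x \<in> S \<and> (\<exists>e>0. \<forall>y\<in>S. dist y x < e \<longrightarrow> f x \<le> f y)"

definition local_max_on :: "('a::metric_space \<Rightarrow> real) \<Rightarrow> 'a set \<Rightarrow> 'a \<Rightarrow> bool" where
  "local_max_on f S x \<longleftrightarrow> x \<in> S \<and> (\<exists>e>0. \<forall>y\<in>S. dist y x < e \<longrightarrow> f y \<le> f x)"

definition global_min_on :: "('a \<Rightarrow> real) \<Rightarrow> 'a set \<Rightarrow> 'a \<Rightarrow> bool" where
  "global_min_on f S x \<longleftrightarrow> x \<in> S \<and> (\<forall>y\<in>S. f x \<le> f y)"

definition global_max_on :: "('a \<Rightarrow> real) \<Rightarrow> 'a set \<Rightarrow> 'a \<Rightarrow> bool" where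
  "global_max_on f S x \<longleftrightarrow> x \<in> S \<and> (\<forall>y\<in>S. f y \<le> f x)"

end

theory Submission
  imports Defs
begin

definition so3c :: "real \<Rightarrow> real \<Rightarrow> real \<Rightarrow> real \<Rightarrow> real \<Rightarrow> real \<Rightarrow> real \<Rightarrow> real \<Rightarrow> real \<Rightarrow> bool" where
 "so3c a b c d e f g h k \<longleftrightarrow>
   a*a+d*d+g*g = 1 \<and> b*b+e*e+h*h=1 \<and> c*c+f*f+k*k=1 \<and> a*b+d*e+g*h=0 \<and> a*c+d*f+g*k=0 \<and> b*c+e*f+h*k=0 \<and>
   a*a+b*b+c*c = 1 \<and> d*d+e*e+f*f=1 \<and> g*g+h*h+k*k=1 \<and> a*d+b*e+c*f=0 \<and> a*g+b*h+c*k=0 \<and> d*g+e*h+f*k=0 \<and>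
   a*e*k - a*f*h - b*d*k + b*f*g + c*d*h - c*e*g = 1"

lemma so3c_cof:
  assumes "so3c a b c d e f g h k"
  shows "a = e*k - f*h \<and> b = f*g - d*k \<and> c = d*h - e*g \<and> d = h*c - k*b \<and> e = k*a - g*c \<and> f = g*b - h*a
       \<and> g = b*f - c*e \<and> h = c*d - a*f \<and> k = a*e - b*d"
proof -
  have "a - (e*k - f*h) = (a*a+d*d+g*g - 1)*(e*k - f*h) + (a*b+d*e+g*h)*(f*g - d*k) + (a*c+d*f+g*k)*(d*h - e*g) - a*(a*e*k - a*f*h - b*d*k + b*f*g + c*d*h - c*e*g - 1)" by (simp add: algebra_simps)
  hence c00: "a = (e*k - f*h)" using assms unfolding so3c_def by simp
  have "b - (f*g - d*k) = (a*b+d*e+g*h)*(e*k - f*h) + (b*b+e*e+h*h - 1)*(f*g - d*k) + (b*c+e*f+h*k)*(d*h - e*g) - b*(a*e*k - a*f*h - b*d*k + b*f*g + c*d*h - c*e*g - 1)" by (simp add: algebra_simps)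
  hence c01: "b = (f*g - d*k)" using assms unfolding so3c_def by simp
  have "c - (d*h - e*g) = (a*c+d*f+g*k)*(e*k - f*h) + (b*c+e*f+h*k)*(f*g - d*k) + (c*c+f*f+k*k - 1)*(d*h - e*g) - c*(a*e*k - a*f*h - b*d*k + b*f*g + c*d*h - c*e*g - 1)" by (simp add: algebra_simps)
  hence c02: "c = (d*h - e*g)" using assms unfolding so3c_def by simp
  have "d - (h*c - k*b) = (a*a+d*d+g*g - 1)*(h*c - k*b) + (a*b+d*e+g*h)*(k*a - g*c) + (a*c+d*f+g*k)*(g*b - h*a) - d*(a*e*k - a*f*h - b*d*k + b*f*g + c*d*h - c*e*g - 1)" by (simp add: algebra_simps)
  hence c10: "d = (h*c - k*b)" using assms unfolding so3c_def by simp
  have "e - (k*a - g*c) = (a*b+d*e+g*h)*(h*c - k*b) + (b*b+e*e+h*h - 1)*(k*a - g*c) + (b*c+e*f+h*k)*(g*b - h*a) - e*(a*e*k - a*f*h - b*d*k + b*f*g + c*d*h - c*e*g - 1)" by (simp add: algebra_simps)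
  hence c11: "e = (k*a - g*c)" using assms unfolding so3c_def by simp
  have "f - (g*b - h*a) = (a*c+d*f+g*k)*(h*c - k*b) + (b*c+e*f+h*k)*(k*a - g*c) + (c*c+f*f+k*k - 1)*(g*b - h*a) - f*(a*e*k - a*f*h - b*d*k + b*f*g + c*d*h - c*e*g - 1)" by (simp add: algebra_simps)
  hence c12: "f = (g*b - h*a)" using assms unfolding so3c_def by simp
  have "g - (b*f - c*e) = (a*a+d*d+g*g - 1)*(b*f - c*e) + (a*b+d*e+g*h)*(c*d - a*f) + (a*c+d*f+g*k)*(a*e - b*d) - g*(a*e*k - a*f*h - b*d*k + b*f*g + c*d*h - c*e*g - 1)" by (simp add: algebra_simps)
  hence c20: "g = (b*f - c*e)" using assms unfolding so3c_def by simp
  have "h - (c*d - a*f) = (a*b+d*e+g*h)*(b*f - c*e) + (b*b+e*e+h*h - 1)*(c*d - a*f) + (b*c+e*f+h*k)*(a*e - b*d) - h*(a*e*k - a*f*h - b*d*k + b*f*g + c*d*h - c*e*g - 1)" by (simp add: algebra_simps)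
  hence c21: "h = (c*d - a*f)" using assms unfolding so3c_def by simp
  have "k - (a*e - b*d) = (a*c+d*f+g*k)*(b*f - c*e) + (b*c+e*f+h*k)*(c*d - a*f) + (c*c+f*f+k*k - 1)*(a*e - b*d) - k*(a*e*k - a*f*h - b*d*k + b*f*g + c*d*h - c*e*g - 1)" by (simp add: algebra_simps)
  hence c22: "k = (a*e - b*d)" using assms unfolding so3c_def by simp
  show ?thesis using c00 c01 c02 c10 c11 c12 c20 c21 c22 by blast
qed


lemma so3c_ids:
  assumes "so3c a b c d e f g h k"
  shows "(1+a+e+k)*(1+a-e-k) = (h-f)^2" "(1+a+e+k)*(1-a+e-k) = (c-g)^2" "(1+a+e+k)*(1-a-e+k) = (d-b)^2"
   "(1+a-e-k)*(1-a+e-k) = (b+d)^2" "(1+a-e-k)*(1-a-e+k) = (c+g)^2" "(1-a+e-k)*(1-a-e+k) = (f+h)^2"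
   "(h-f)*(c-g) = (1+a+e+k)*(b+d)" "(h-f)*(d-b) = (1+a+e+k)*(c+g)" "(c-g)*(d-b) = (1+a+e+k)*(f+h)"
  using so3c_cof[OF assms] assms unfolding so3c_def by algebra+

definition Rq :: "real \<Rightarrow> real \<Rightarrow> real \<Rightarrow> real \<Rightarrow> real^3^3" where
  "Rq w x y z = vector [vector [w^2+x^2-y^2-z^2, 2*(x*y-w*z), 2*(x*z+w*y)],
                        vector [2*(x*y+w*z), w^2-x^2+y^2-z^2, 2*(y*z-w*x)],
                        vector [2*(x*z-w*y), 2*(y*z+w*x), w^2-x^2-y^2+z^2]]"

lemma Rq_nth: "Rq w x y z $1$1 = w^2+x^2-y^2-z^2" "Rq w x y z $1$2 = 2*(x*y-w*z)" "Rq w x y z $1$3 = 2*(x*z+w*y)"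
  "Rq w x y z $2$1 = 2*(x*y+w*z)" "Rq w x y z $2$2 = w^2-x^2+y^2-z^2" "Rq w x y z $2$3 = 2*(y*z-w*x)"
  "Rq w x y z $3$1 = 2*(x*z-w*y)" "Rq w x y z $3$2 = 2*(y*z+w*x)" "Rq w x y z $3$3 = w^2-x^2-y^2+z^2"
  by (simp_all add: Rq_def)

lemma so3c_Rq:
  assumes "w^2+x^2+y^2+z^2 = (1::real)"
  shows "so3c (w^2+x^2-y^2-z^2) (2*(x*y-w*z)) (2*(x*z+w*y)) (2*(x*y+w*z)) (w^2-x^2+y^2-z^2) (2*(y*z-w*x))
     (2*(x*z-w*y)) (2*(y*z+w*x)) (w^2-x^2-y^2+z^2)"
  unfolding so3c_def using assms by algebra


definition qrel :: "real \<Rightarrow> real \<Rightarrow> real \<Rightarrow> real \<Rightarrow> real \<Rightarrow> real \<Rightarrow> real \<Rightarrow> real \<Rightarrow> real \<Rightarrow> real \<Rightarrow> real \<Rightarrow> real \<Rightarrow> real \<Rightarrow> bool" where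
 "qrel a b c d e f g h k w x y z \<longleftrightarrow> w^2+x^2+y^2+z^2 = 1 \<and>
   a = w^2+x^2-y^2-z^2 \<and> b = 2*(x*y-w*z) \<and> c = 2*(x*z+w*y) \<and>
   d = 2*(x*y+w*z) \<and> e = w^2-x^2+y^2-z^2 \<and> f = 2*(y*z-w*x) \<and>
   g = 2*(x*z-w*y) \<and> h = 2*(y*z+w*x) \<and> k = w^2-x^2-y^2+z^2"

lemma pivot:
  assumes S: "so3c a b c d e f g h k" and A: "1+a+e+k > 0"
  shows "\<exists>w x y z. qrel a b c d e f g h k w x y z"
proof -
  note I = so3c_ids[OF S]
  define AA where "AA = 1+a+e+k"
  define w where "w = sqrt AA / 2"
  have w2: "w^2 = AA/4" using A by (simp add: w_def AA_def power_divide)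
  have wpos: "w > 0" using A by (simp add: w_def AA_def)
  define x where "x = (h-f)/(4*w)"
  define y where "y = (c-g)/(4*w)"
  define z where "z = (d-b)/(4*w)"
  have AApos: "AA > 0" using A AA_def by simp
  have x2: "x^2 = (1+a-e-k)/4" unfolding x_def using I(1) w2 wpos AApos
    by (simp add: power_divide power_mult_distrib AA_def field_simps)
  have y2: "y^2 = (1-a+e-k)/4" unfolding y_def using I(2) w2 wpos AApos
    by (simp add: power_divide power_mult_distrib AA_def field_simps)
  have z2: "z^2 = (1-a-e+k)/4" unfolding z_def using I(3) w2 wpos AApos
    by (simp add: power_divide power_mult_distrib AA_def field_simps)
  have xy: "x*y = (b+d)/4"
  proof -
    have "x*y = (h-f)*(c-g)/(16*w^2)" using wpos by (simp add: x_def y_def power2_eq_square)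
    also have "\<dots> = AA*(b+d)/(4*AA)" using I(7) w2 by (simp add: AA_def)
    also have "\<dots> = (b+d)/4" using AApos by simp
    finally show ?thesis .
  qed
  have xz: "x*z = (c+g)/4"
  proof -
    have "x*z = (h-f)*(d-b)/(16*w^2)" using wpos by (simp add: x_def z_def power2_eq_square)
    also have "\<dots> = AA*(c+g)/(4*AA)" using I(8) w2 by (simp add: AA_def)
    also have "\<dots> = (c+g)/4" using AApos by simp
    finally show ?thesis .
  qed
  have yz: "y*z = (f+h)/4"
  proof -
    have "y*z = (c-g)*(d-b)/(16*w^2)" using wpos by (simp add: y_def z_def power2_eq_square)
    also have "\<dots> = AA*(f+h)/(4*AA)" using I(9) w2 by (simp add: AA_def)
    also have "\<dots> = (f+h)/4" using AApos by simp
    finally show ?thesis .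
  qed
  have wx: "w*x = (h-f)/4" unfolding x_def using wpos by simp
  have wy: "w*y = (c-g)/4" unfolding y_def using wpos by simp
  have wz: "w*z = (d-b)/4" unfolding z_def using wpos by simp
  have "qrel a b c d e f g h k w x y z"
    unfolding qrel_def w2 x2 y2 z2 right_diff_distrib xy xz yz wx wy wz AA_def by (simp add: field_simps)
  then show ?thesis by blast
qed


lemma quat:
  assumes S: "so3c a b c d e f g h k"
  shows "\<exists>w x y z. qrel a b c d e f g h k w x y z"
proof -
  consider "1+a+e+k > 0" | "1+a-e-k > 0" | "1-a+e-k > 0" | "1-a-e+k > 0" by linarith
  then show ?thesis
  proof cases
    case 1 then show ?thesis using pivot[OF S] by blast
  next
    case 2
    have S': "so3c a (-b) (-c) d (-e) (-f) g (-h) (-k)" using S unfolding so3c_def by (simp add: algebra_simps)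
    obtain w x y z where "qrel a (-b) (-c) d (-e) (-f) g (-h) (-k) w x y z" using pivot[OF S'] 2 by auto
    then have "qrel a b c d e f g h k (-x) w z (-y)" unfolding qrel_def by (auto simp: algebra_simps)
    then show ?thesis by blast
  next
    case 3
    have S': "so3c (-a) b (-c) (-d) e (-f) (-g) h (-k)" using S unfolding so3c_def by (simp add: algebra_simps)
    obtain w x y z where "qrel (-a) b (-c) (-d) e (-f) (-g) h (-k) w x y z" using pivot[OF S'] 3 by auto
    then have "qrel a b c d e f g h k (-y) (-z) w x" unfolding qrel_def by (auto simp: algebra_simps)
    then show ?thesis by blast
  next
    case 4
    have S': "so3c (-a) (-b) c (-d) (-e) f (-g) (-h) k" using S unfolding so3c_def by (simp add: algebra_simps)
    obtain w x y z where "qrel (-a) (-b) c (-d) (-e) f (-g) (-h) k w x y z" using pivot[OF S'] 4 by auto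
    then have "qrel a b c d e f g h k (-z) y (-x) w" unfolding qrel_def by (auto simp: algebra_simps)
    then show ?thesis by blast
  qed
qed


lemma SO3_iff: "R \<in> SO3 \<longleftrightarrow> so3c (R$1$1) (R$1$2) (R$1$3) (R$2$1) (R$2$2) (R$2$3) (R$3$1) (R$3$2) (R$3$3)"
  unfolding SO3_def orthogonal_matrix_def so3c_def
  by (simp add: vec_eq_iff forall_3 matrix_matrix_mult_def transpose_def mat_def sum_3 det_3 algebra_simps; safe; simp_all add: algebra_simps)

lemma diag3_nth: "diag3 a b c $ i $ j = (if i = j then (vector [a,b,c] :: real^3) $ i else 0)"
  by (simp add: diag3_def)

definition Hf :: "real \<Rightarrow> real \<Rightarrow> real \<Rightarrow> real \<Rightarrow> real \<Rightarrow> real \<Rightarrow> real" where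
  "Hf l1 l2 l3 u v t = 3 + (l1^2+l2^2+l3^2)/2 + (l1*u+l2 * v+l3*t)^2/2 - (l2*l3*u + l1*l3 * v + l1*l2*t) - 2*(l1*u+l2 * v+l3*t)"


lemma W_scalar:
  assumes S: "so3c a b c d e f g h k"
  shows "(2 * (l1 * a) - 2) * (2 * (l1 * a) - 2) / 4 +
     (b * l1 + d * l2) * (b * l1 + d * l2) / 4 +
     (c * l1 + g * l3) * (c * l1 + g * l3) / 4 +
     ((d * l2 + b * l1) * (d * l2 + b * l1) / 4 +
      (2 * (l2 * e) - 2) * (2 * (l2 * e) - 2) / 4 +
      (f * l2 + h * l3) * (f * l2 + h * l3) / 4) +
     ((g * l3 + c * l1) * (g * l3 + c * l1) / 4 +
      (h * l3 + f * l2) * (h * l3 + f * l2) / 4 +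
      (2 * (l3 * k) - 2) * (2 * (l3 * k) - 2) / 4) = Hf l1 l2 l3 a e k"
proof -
  have "(2 * (l1 * a) - 2) * (2 * (l1 * a) - 2) / 4 +
     (b * l1 + d * l2) * (b * l1 + d * l2) / 4 +
     (c * l1 + g * l3) * (c * l1 + g * l3) / 4 +
     ((d * l2 + b * l1) * (d * l2 + b * l1) / 4 +
      (2 * (l2 * e) - 2) * (2 * (l2 * e) - 2) / 4 +
      (f * l2 + h * l3) * (f * l2 + h * l3) / 4) +
     ((g * l3 + c * l1) * (g * l3 + c * l1) / 4 +
      (h * l3 + f * l2) * (h * l3 + f * l2) / 4 +
      (2 * (l3 * k) - 2) * (2 * (l3 * k) - 2) / 4) - Hf l1 l2 l3 a e k = l1^2/2*(a*a+b*b+c*c-1) + l2^2/2*(d*d+e*e+f*f-1) + l3^2/2*(g*g+h*h+k*k-1)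
     + l1*l2*(b*d - a*e + k) + l1*l3*(c*g - a*k + e) + l2*l3*(f*h - e*k + a)"
    unfolding Hf_def by (simp add: power2_eq_square field_simps)
  moreover have "b*d - a*e + k = 0" "c*g - a*k + e = 0" "f*h - e*k + a = 0" using so3c_cof[OF S] by (simp_all add: algebra_simps)
  moreover have "a*a+b*b+c*c-1 = 0" "d*d+e*e+f*f-1 = 0" "g*g+h*h+k*k-1=0" using S unfolding so3c_def by linarith+
  ultimately show ?thesis by simp
qed

lemma W_SO3: assumes "R \<in> SO3"
  shows "W10 (diag3 l1 l2 l3) R = Hf l1 l2 l3 (R$1$1) (R$2$2) (R$3$3)"
proof -
  have "W10 (diag3 l1 l2 l3) R = (2 * (l1 * R $ 1 $ 1) - 2) * (2 * (l1 * R $ 1 $ 1) - 2) / 4 +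
     (R $ 1 $ 2 * l1 + R $ 2 $ 1 * l2) * (R $ 1 $ 2 * l1 + R $ 2 $ 1 * l2) / 4 +
     (R $ 1 $ 3 * l1 + R $ 3 $ 1 * l3) * (R $ 1 $ 3 * l1 + R $ 3 $ 1 * l3) / 4 +
     ((R $ 2 $ 1 * l2 + R $ 1 $ 2 * l1) * (R $ 2 $ 1 * l2 + R $ 1 $ 2 * l1) / 4 +
      (2 * (l2 * R $ 2 $ 2) - 2) * (2 * (l2 * R $ 2 $ 2) - 2) / 4 +
      (R $ 2 $ 3 * l2 + R $ 3 $ 2 * l3) * (R $ 2 $ 3 * l2 + R $ 3 $ 2 * l3) / 4) +
     ((R $ 3 $ 1 * l3 + R $ 1 $ 3 * l1) * (R $ 3 $ 1 * l3 + R $ 1 $ 3 * l1) / 4 +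
      (R $ 3 $ 2 * l3 + R $ 2 $ 3 * l2) * (R $ 3 $ 2 * l3 + R $ 2 $ 3 * l2) / 4 +
      (2 * (l3 * R $ 3 $ 3) - 2) * (2 * (l3 * R $ 3 $ 3) - 2) / 4)"
    unfolding W10_def frob_sq_def msym_def trace_def
    by (simp add: sum_3 matrix_matrix_mult_def transpose_def mat_def diag3_nth)
  also have "\<dots> = Hf l1 l2 l3 (R$1$1) (R$2$2) (R$3$3)"
    by (rule W_scalar) (use assms SO3_iff in auto)
  finally show ?thesis .
qed

lemma SO3_quat: assumes "R \<in> SO3"
  shows "\<exists>w x y z. w^2+x^2+y^2+z^2 = 1 \<and> R = Rq w x y z"
proof -
  obtain w x y z where q: "qrel (R$1$1) (R$1$2) (R$1$3) (R$2$1) (R$2$2) (R$2$3) (R$3$1) (R$3$2) (R$3$3) w x y z"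
    using quat assms SO3_iff by blast
  have "R = Rq w x y z" using q unfolding qrel_def
    by (simp add: vec_eq_iff forall_3 Rq_nth)
  then show ?thesis using q qrel_def by blast
qed

lemma Rq_SO3: assumes "w^2+x^2+y^2+z^2 = 1" shows "Rq w x y z \<in> SO3"
  unfolding SO3_iff Rq_nth using so3c_Rq[OF assms] .

lemma SO3_bary: assumes "R \<in> SO3"
  shows "0 \<le> 1+R$1$1+R$2$2+R$3$3" "0 \<le> 1+R$1$1-R$2$2-R$3$3" "0 \<le> 1-R$1$1+R$2$2-R$3$3" "0 \<le> 1-R$1$1-R$2$2+R$3$3"
proof -
  note I = so3c_ids[OF assms[unfolded SO3_iff]]
  define A where "A = 1+R$1$1+R$2$2+R$3$3"
  define B where "B = 1+R$1$1-R$2$2-R$3$3"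
  define C where "C = 1-R$1$1+R$2$2-R$3$3"
  define D where "D = 1-R$1$1-R$2$2+R$3$3"
  have p: "A*B \<ge> 0" "A*C \<ge> 0" "A*D \<ge> 0" "B*C \<ge> 0" "B*D \<ge> 0" "C*D \<ge> 0"
    using I(1-6) unfolding A_def B_def C_def D_def by (metis zero_le_power2 diff_diff_eq)+
  have s: "A+B+C+D = 4" unfolding A_def B_def C_def D_def by simp
  have "0 \<le> A \<and> 0 \<le> B \<and> 0 \<le> C \<and> 0 \<le> D"
  proof (rule ccontr)
    assume "\<not> ?thesis"
    then consider "A < 0" | "B < 0" | "C < 0" | "D < 0" by linarith
    then show False
    proof cases
      case 1 then have "B \<le> 0" "C \<le> 0" "D \<le> 0" using p by (auto simp: zero_le_mult_iff)
      then show False using s 1 by linarith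
    next
      case 2 then have "A \<le> 0" "C \<le> 0" "D \<le> 0" using p by (auto simp: zero_le_mult_iff)
      then show False using s 2 by linarith
    next
      case 3 then have "A \<le> 0" "B \<le> 0" "D \<le> 0" using p by (auto simp: zero_le_mult_iff)
      then show False using s 3 by linarith
    next
      case 4 then have "A \<le> 0" "B \<le> 0" "C \<le> 0" using p by (auto simp: zero_le_mult_iff)
      then show False using s 4 by linarith
    qed
  qed
  then show "0 \<le> 1+R$1$1+R$2$2+R$3$3" "0 \<le> 1+R$1$1-R$2$2-R$3$3" "0 \<le> 1-R$1$1+R$2$2-R$3$3" "0 \<le> 1-R$1$1-R$2$2+R$3$3"
    unfolding A_def B_def C_def D_def by auto
qed


definition sg :: "real \<Rightarrow> real" where "sg t = (if t < 0 then -1 else 1)"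

lemma sg_sqrt: "sg t * \<bar>t\<bar> = t"
  by (simp add: sg_def)

lemma sg_sq: "0 \<le> P \<Longrightarrow> (sg t * sqrt P)^2 = P"
  by (simp add: sg_def power_mult_distrib)

lemma path_tendsto: "((\<lambda>s. sg t * sqrt((1-s)*t^2 + s*P)) \<longlongrightarrow> t) (at_right 0)"
proof -
  have "((\<lambda>s. sg t * sqrt((1-s)*t^2 + s*P)) \<longlongrightarrow> sg t * sqrt((1-0)*t^2 + 0*P)) (at_right (0::real))"
    by (intro tendsto_intros)
  then show ?thesis by (simp add: sg_sqrt)
qed

lemma Rq_tendsto:
  assumes "(f \<longlongrightarrow> w) F" "(g \<longlongrightarrow> x) F" "(h \<longlongrightarrow> y) F" "(k \<longlongrightarrow> z) F"
  shows "((\<lambda>s. Rq (f s) (g s) (h s) (k s)) \<longlongrightarrow> Rq w x y z) F"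
proof (rule vec_tendstoI)
  fix i :: 3
  show "((\<lambda>s. Rq (f s) (g s) (h s) (k s) $ i) \<longlongrightarrow> Rq w x y z $ i) F"
  proof (rule vec_tendstoI)
    fix j :: 3
    from exhaust_3[of i] exhaust_3[of j]
    show "((\<lambda>s. Rq (f s) (g s) (h s) (k s) $ i $ j) \<longlongrightarrow> Rq w x y z $ i $ j) F"
      by (elim disjE) (simp_all add: Rq_nth, (intro tendsto_intros assms)+)
  qed
qed

lemma Hf_convex:
  assumes "0 \<le> s" "s \<le> 1"
  shows "Hf l1 l2 l3 ((1-s)*u0+s*u1) ((1-s)*m0+s*m1) ((1-s)*t0+s*t1) \<le> (1-s)*Hf l1 l2 l3 u0 m0 t0 + s*Hf l1 l2 l3 u1 m1 t1"
proof -
  define X where "X = l1*u0+l2*m0+l3*t0"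
  define Y where "Y = l1*u1+l2*m1+l3*t1"
  have "(1-s)*Hf l1 l2 l3 u0 m0 t0 + s*Hf l1 l2 l3 u1 m1 t1 - Hf l1 l2 l3 ((1-s)*u0+s*u1) ((1-s)*m0+s*m1) ((1-s)*t0+s*t1)
     = s*(1-s)*(X-Y)^2/2"
    unfolding Hf_def X_def Y_def by (simp add: power2_eq_square field_simps)
  moreover have "s*(1-s)*(X-Y)^2/2 \<ge> 0" using assms by simp
  ultimately show ?thesis by linarith
qed

lemma W_Rq: "w^2+x^2+y^2+z^2 = 1 \<Longrightarrow> W10 (diag3 l1 l2 l3) (Rq w x y z) = Hf l1 l2 l3 (w^2+x^2-y^2-z^2) (w^2-x^2+y^2-z^2) (w^2-x^2-y^2+z^2)"
  using W_SO3[OF Rq_SO3] by (simp add: Rq_nth)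

lemma part1:
  assumes lm: "local_min_on (W10 (diag3 l1 l2 l3)) SO3 R0"
  shows "global_min_on (W10 (diag3 l1 l2 l3)) SO3 R0"
proof (rule ccontr)
  let ?W = "W10 (diag3 l1 l2 l3)"
  assume "\<not> ?thesis"
  then obtain R1 where R1: "R1 \<in> SO3" "?W R1 < ?W R0" using lm unfolding global_min_on_def local_min_on_def by force
  from lm obtain e where e: "e > 0" "\<And>y. y \<in> SO3 \<Longrightarrow> dist y R0 < e \<Longrightarrow> ?W R0 \<le> ?W y" and R0: "R0 \<in> SO3"
    unfolding local_min_on_def by blast
  obtain w0 x0 y0 z0 where q0: "w0^2+x0^2+y0^2+z0^2 = 1" "R0 = Rq w0 x0 y0 z0" using SO3_quat[OF R0] by blast
  define A1 where "A1 = (1+R1$1$1+R1$2$2+R1$3$3)/4"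
  define B1 where "B1 = (1+R1$1$1-R1$2$2-R1$3$3)/4"
  define C1 where "C1 = (1-R1$1$1+R1$2$2-R1$3$3)/4"
  define D1 where "D1 = (1-R1$1$1-R1$2$2+R1$3$3)/4"
  have nn: "A1 \<ge> 0" "B1 \<ge> 0" "C1 \<ge> 0" "D1 \<ge> 0" using SO3_bary[OF R1(1)] unfolding A1_def B1_def C1_def D1_def by auto
  have W1: "?W R1 = Hf l1 l2 l3 (A1+B1-C1-D1) (A1-B1+C1-D1) (A1-B1-C1+D1)"
    unfolding W_SO3[OF R1(1)] A1_def B1_def C1_def D1_def by (simp add: field_simps)
  have W0: "?W R0 = Hf l1 l2 l3 (w0^2+x0^2-y0^2-z0^2) (w0^2-x0^2+y0^2-z0^2) (w0^2-x0^2-y0^2+z0^2)"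
    using W_Rq[OF q0(1)] q0(2) by simp
  define qw where "qw s = sg w0 * sqrt((1-s)*w0^2 + s*A1)" for s
  define qx where "qx s = sg x0 * sqrt((1-s)*x0^2 + s*B1)" for s
  define qy where "qy s = sg y0 * sqrt((1-s)*y0^2 + s*C1)" for s
  define qz where "qz s = sg z0 * sqrt((1-s)*z0^2 + s*D1)" for s
  have lim: "((\<lambda>s. Rq (qw s) (qx s) (qy s) (qz s)) \<longlongrightarrow> R0) (at_right 0)"
    unfolding q0(2) qw_def qx_def qy_def qz_def by (intro Rq_tendsto path_tendsto)
  have "eventually (\<lambda>s. dist (Rq (qw s) (qx s) (qy s) (qz s)) R0 < e) (at_right 0)"
    using tendstoD[OF lim e(1)] .
  then obtain b where b: "b > 0" "\<And>s. s > 0 \<Longrightarrow> s < b \<Longrightarrow> dist (Rq (qw s) (qx s) (qy s) (qz s)) R0 < e"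
    unfolding eventually_at_right_field by auto
  define s where "s = min (b/2) 1"
  have s: "0 < s" "s < b" "s \<le> 1" using b unfolding s_def by auto
  have sq: "(qw s)^2 = (1-s)*w0^2 + s*A1" "(qx s)^2 = (1-s)*x0^2 + s*B1"
     "(qy s)^2 = (1-s)*y0^2 + s*C1" "(qz s)^2 = (1-s)*z0^2 + s*D1"
    unfolding qw_def qx_def qy_def qz_def using s nn by (intro sg_sq; simp)+
  have sum1: "A1+B1+C1+D1 = 1" unfolding A1_def B1_def C1_def D1_def by (simp add: field_simps)
  have unit: "(qw s)^2+(qx s)^2+(qy s)^2+(qz s)^2 = 1"
  proof -
    have "(qw s)^2+(qx s)^2+(qy s)^2+(qz s)^2 = (1-s)*(w0^2+x0^2+y0^2+z0^2) + s*(A1+B1+C1+D1)"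
      unfolding sq by (simp add: algebra_simps)
    then show ?thesis using q0(1) sum1 by simp
  qed
  have RS: "Rq (qw s) (qx s) (qy s) (qz s) \<in> SO3" using Rq_SO3[OF unit] .
  have "?W (Rq (qw s) (qx s) (qy s) (qz s)) = Hf l1 l2 l3
      ((1-s)*(w0^2+x0^2-y0^2-z0^2) + s*(A1+B1-C1-D1))
      ((1-s)*(w0^2-x0^2+y0^2-z0^2) + s*(A1-B1+C1-D1))
      ((1-s)*(w0^2-x0^2-y0^2+z0^2) + s*(A1-B1-C1+D1))"
    unfolding W_Rq[OF unit] sq by (simp add: algebra_simps)
  also have "\<dots> \<le> (1-s)*?W R0 + s*?W R1" unfolding W0 W1 using s by (intro Hf_convex) auto
  also have "\<dots> < ?W R0"
  proof -
    have "s*(?W R1 - ?W R0) < 0" using R1(2) s by (intro mult_pos_neg) auto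
    then show ?thesis by (simp add: algebra_simps)
  qed
  finally have "?W (Rq (qw s) (qx s) (qy s) (qz s)) < ?W R0" .
  moreover have "?W R0 \<le> ?W (Rq (qw s) (qx s) (qy s) (qz s))" using e(2)[OF RS b(2)[OF s(1) s(2)]] .
  ultimately show False by linarith
qed


lemma entry_dist: "\<bar>A$i$j - B$i$j\<bar> \<le> dist A (B::real^3^3)"
proof -
  have "\<bar>(A-B)$i$j\<bar> \<le> norm ((A-B)$i)" by (rule component_le_norm_cart)
  also have "\<dots> \<le> norm (A-B)" by (rule Finite_Cartesian_Product.norm_nth_le)
  finally show ?thesis by (simp add: dist_norm)
qed

lemma diagSO3: "\<lbrakk>a^2 = 1; b^2 = 1; c^2 = 1; a*b*c = 1\<rbrakk> \<Longrightarrow> diag3 a b c \<in> SO3"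
  unfolding SO3_iff so3c_def by (simp add: diag3_nth power2_eq_square)

lemma part2:
  assumes l: "l1 > l2" "l2 > l3" "l3 > 0" "l1 - l2 > 2"
  shows "local_max_on (W10 (diag3 l1 l2 l3)) SO3 (diag3 1 (-1) (-1)) \<and>
            \<not> global_max_on (W10 (diag3 l1 l2 l3)) SO3 (diag3 1 (-1) (-1))"
proof
  let ?W = "W10 (diag3 l1 l2 l3)"
  let ?E = "diag3 1 (-1) (-1) :: real^3^3"
  have ESO: "?E \<in> SO3" by (rule diagSO3) auto
  have WE: "?W ?E = Hf l1 l2 l3 1 (-1) (-1)" using W_SO3[OF ESO] by (simp add: diag3_nth)
  have E2SO: "diag3 (-1) 1 (-1) \<in> SO3" by (rule diagSO3) auto
  have WE2: "?W (diag3 (-1) 1 (-1)) = Hf l1 l2 l3 (-1) 1 (-1)" using W_SO3[OF E2SO] by (simp add: diag3_nth)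
  have "Hf l1 l2 l3 (-1) 1 (-1) - Hf l1 l2 l3 1 (-1) (-1) = 4*(l1-l2)"
    unfolding Hf_def by (simp add: power2_eq_square field_simps)
  then show "\<not> global_max_on ?W SO3 ?E" using E2SO WE WE2 l unfolding global_max_on_def by force
  define p where "p = l2+l3"
  define q where "q = l1-l2"
  define r where "r = l1-l3"
  define K where "K = p+q+r"
  define m where "m = min (p+2) (min (q-2) (r-2))"
  have pos: "p > 0" "q > 2" "r > 2" "K > 0" "m > 0" using l unfolding p_def q_def r_def K_def m_def by auto
  define e where "e = m / K"
  have epos: "e > 0" using pos unfolding e_def by simp
  have Ke: "K*e = m" using pos unfolding e_def by simp
  have "\<forall>R\<in>SO3. dist R ?E < e \<longrightarrow> ?W R \<le> ?W ?E"
  proof (intro ballI impI)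
    fix R assume R: "R \<in> SO3" "dist R ?E < e"
    define u where "u = R$1$1"
    define v where "v = R$2$2"
    define t where "t = R$3$3"
    have du: "\<bar>u - 1\<bar> < e" using entry_dist[of R 1 1 ?E] R(2) unfolding u_def by (simp add: diag3_nth)
    have dv: "\<bar>v + 1\<bar> < e" using entry_dist[of R 2 2 ?E] R(2) unfolding v_def by (simp add: diag3_nth)
    have dt: "\<bar>t + 1\<bar> < e" using entry_dist[of R 3 3 ?E] R(2) unfolding t_def by (simp add: diag3_nth)
    define A where "A = (1+u+v+t)/4"
    define C where "C = (1-u+v-t)/4"
    define D where "D = (1-u-v+t)/4"
    have nn: "A \<ge> 0" "C \<ge> 0" "D \<ge> 0" using SO3_bary[OF R(1)] unfolding A_def C_def D_def u_def v_def t_def by auto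
    have le: "A \<le> e" "C \<le> e" "D \<le> e" using du dv dt unfolding A_def C_def D_def by auto
    have uvt: "u = 1 - 2*C - 2*D" "v = -1 + 2*A + 2*C" "t = -1 + 2*A + 2*D"
      unfolding A_def C_def D_def by (simp_all add: field_simps)
    define X where "X = p*A - q*C - r*D"
    define T where "T = p*(p+2)*A + q*(q-2)*C + r*(r-2)*D"
    define S where "S = p*A + q*C + r*D"
    have diff: "Hf l1 l2 l3 u v t - Hf l1 l2 l3 1 (-1) (-1) = -2*T + 2*X^2"
      unfolding uvt Hf_def X_def T_def p_def q_def r_def by (simp add: power2_eq_square field_simps)
    have S0: "S \<ge> 0" using nn pos unfolding S_def by simp
    have XS: "\<bar>X\<bar> \<le> S" using nn pos unfolding S_def X_def by (simp add: abs_le_iff)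
    have Sm: "S \<le> m"
    proof -
      have "S \<le> p*e + q*e + r*e" unfolding S_def using le pos
        by (intro add_mono mult_left_mono) auto
      also have "\<dots> = K*e" unfolding K_def by (simp add: algebra_simps)
      finally show ?thesis using Ke by simp
    qed
    have "X^2 \<le> S^2" using XS S0 by (metis abs_le_square_iff abs_of_nonneg)
    also have "\<dots> \<le> S*m" using Sm S0 by (simp add: power2_eq_square mult_left_mono)
    also have "\<dots> = p*A*m + q*C*m + r*D*m" unfolding S_def by (simp add: algebra_simps)
    also have "\<dots> \<le> p*A*(p+2) + q*C*(q-2) + r*D*(r-2)"
      using nn pos unfolding m_def by (intro add_mono mult_left_mono) auto
    finally have "X^2 \<le> T" unfolding T_def by (simp add: algebra_simps)
    then have "-2*T + 2*X^2 \<le> 0" by linarith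
    then have "Hf l1 l2 l3 u v t \<le> Hf l1 l2 l3 1 (-1) (-1)" using diff by linarith
    then show "?W R \<le> ?W ?E" unfolding WE W_SO3[OF R(1)] u_def v_def t_def .
  qed
  then show "local_max_on ?W SO3 ?E" unfolding local_max_on_def using ESO epos by blast
qed

theorem mainTheorem13:
  shows "(\<forall>l1 l2 l3 :: real. l1 \<ge> l2 \<and> l2 \<ge> l3 \<and> l3 > 0 \<longrightarrow>
            (\<forall>R. local_min_on (W10 (diag3 l1 l2 l3)) SO3 R \<longrightarrow>
                 global_min_on (W10 (diag3 l1 l2 l3)) SO3 R))
       \<and> (\<forall>l1 l2 l3 :: real. l1 > l2 \<and> l2 > l3 \<and> l3 > 0 \<and> l1 - l2 > 2 \<longrightarrow>
            local_max_on (W10 (diag3 l1 l2 l3)) SO3 (diag3 1 (-1) (-1)) \<and>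
            \<not> global_max_on (W10 (diag3 l1 l2 l3)) SO3 (diag3 1 (-1) (-1)))"
  using part1 part2 by blast

end
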